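(* Fix $\vartheta\in\mathbb{C}$, let $r_1,r_2$ be the two roots (with multiplicity) of $\vartheta-(\mathtt{h}+1)^2$, let $\omega=3+\max(\mathrm{Re}\, r_1,\mathrm{Re}\, r_2)$ and $\mathbb{C}_\omega=\{z\in\mathbb{C}: \mathrm{Re}\,z\in[\omega,\omega+2)\}$. Let $u=c\prod_{t\in\mathbb{C}_\omega}(\mathtt{h}-t)^{\mathtt{m}(t)}\in\mathbb{C}(\mathtt{h})^\times$ with $c\in\mathbb{C}^\times$ and $\mathtt{m}:\mathbb{C}_\omega\to\mathbb{Z}$ of finite support. Then $L_u\cap\mathbb{C}[\mathtt{h}]=\mathbb{C}[\mathtt{h}]$, i.e. the monic generator of the ideal $L_u\cap\mathbb{C}[\mathtt{h}]$ of $\mathbb{C}[\mathtt{h}]$ is $1$, and hence $\mathbb{C}[\mathtt{h}]\subset L_u$.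
   Context: $\mathfrak{g}=\mathfrak{sl}_2(\mathbb{C})$ with basis $\mathtt{e},\mathtt{f},\mathtt{h}$, $[\mathtt{h},\mathtt{e}]=2\mathtt{e}$, $[\mathtt{h},\mathtt{f}]=-2\mathtt{f}$, $[\mathtt{e},\mathtt{f}]=\mathtt{h}$; Casimir element $\mathtt{c}=(\mathtt{h}+1)^2+4\mathtt{f}\mathtt{e}$; $U_\vartheta=U(\mathfrak{g})/U(\mathfrak{g})(\mathtt{c}-\vartheta)$. Let $\Bbbk=\mathbb{C}(\mathtt{h})$, $\sigma$ the automorphism of $\Bbbk$ fixing $\mathbb{C}$ with $\sigma(\mathtt{h})=\mathtt{h}-2$, and $R=\Bbbk[x,x^{-1},\sigma]$ (skew Laurent polynomials: $xr=\sigma(r)x$ for $r\in\Bbbk$). The assignment $\mathtt{e}\mapsto x$, $\mathtt{f}\mapsto\frac{\vartheta-(\mathtt{h}+1)^2}{4}x^{-1}$, $\mathtt{h}\mapsto\mathtt{h}$ gives an injective algebra homomorphism $U_\vartheta\to R$. For $u\in\Bbbk^\times$, $N_u$ is $\Bbbk$ with the $R$-module structure where $\Bbbk$ acts by multiplication and $x\cdot b=\sigma(b)u$; thus as a $U_\vartheta$-module, $\mathtt{h}$ acts by multiplication, $\mathtt{e}\cdot b=\sigma(b)u$ and $\mathtt{f}\cdot b=\frac{\vartheta-(\mathtt{h}+1)^2}{4}\cdot\frac{\sigma^{-1}(b)}{\sigma^{-1}(u)}$. It is known that $N_u$, viewed as a $U_\vartheta$-module, has a unique simple submodule; this is denoted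 $L_u$. *)

theory Defs
  imports Complex_Main "HOL-Computational_Algebra.Polynomial"
    "HOL-Computational_Algebra.Fraction_Field"
    "HOL-Computational_Algebra.Normalized_Fraction"
    "HOL-Computational_Algebra.Polynomial_Factorial"
    "HOL-Computational_Algebra.Field_as_Ring"
begin

text \<open>The field k = C(h) is modelled as the fraction field of complex polynomials,
  the variable h being the polynomial [:0,1:].\<close>

type_synonym ratfun = "complex poly fract"

definition hvar :: ratfun where
  "hvar = Fract [:0, 1:] 1"

definition poly_to_ratfun :: "complex poly \<Rightarrow> ratfun" where
  "poly_to_ratfun p = Fract p 1"

definition const_rf :: "complex \<Rightarrow> ratfun" where
  "const_rf c = Fract [:c:] 1"

definition shift :: "complex \<Rightarrow> ratfun \<Rightarrow> ratfun" where
  "shift a x = (case quot_of_fract x of (p, q) \<Rightarrow>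
      Fract (pcompose p [:a, 1:]) (pcompose q [:a, 1:]))"

definition sigma :: "ratfun \<Rightarrow> ratfun" where
  "sigma = shift (-2)"

definition sigma_inv :: "ratfun \<Rightarrow> ratfun" where
  "sigma_inv = shift 2"

text \<open>Actions of e and f on N_u (h acts by multiplication by hvar).\<close>

definition e_act :: "ratfun \<Rightarrow> ratfun \<Rightarrow> ratfun" where
  "e_act u b = sigma b * u"

definition f_act :: "complex \<Rightarrow> ratfun \<Rightarrow> ratfun \<Rightarrow> ratfun" where
  "f_act theta u b = ((const_rf theta - (hvar + 1)^2) / 4) * (sigma_inv b / sigma_inv u)"

definition is_submodule :: "complex \<Rightarrow> ratfun \<Rightarrow> ratfun set \<Rightarrow> bool" where
  "is_submodule theta u S \<longleftrightarrow>
     0 \<in> S \<and>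
     (\<forall>x\<in>S. \<forall>y\<in>S. x + y \<in> S) \<and>
     (\<forall>c. \<forall>x\<in>S. const_rf c * x \<in> S) \<and>
     (\<forall>x\<in>S. hvar * x \<in> S) \<and>
     (\<forall>x\<in>S. e_act u x \<in> S) \<and>
     (\<forall>x\<in>S. f_act theta u x \<in> S)"

definition is_simple_submodule :: "complex \<Rightarrow> ratfun \<Rightarrow> ratfun set \<Rightarrow> bool" where
  "is_simple_submodule theta u S \<longleftrightarrow>
     is_submodule theta u S \<and> S \<noteq> {0} \<and>
     (\<forall>T. is_submodule theta u T \<and> T \<subseteq> S \<longrightarrow> T = {0} \<or> T = S)"

end

theory Submission
  imports Defs "HOL-Computational_Algebra.Fundamental_Theorem_Algebra"
begin
lemma lin_deg: "degree [:a, 1::complex:] = 1" by simp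

lemma pcomp_nz: "q \<noteq> 0 \<Longrightarrow> pcompose q [:a, 1::complex:] \<noteq> 0"
  using pcompose_eq_0_iff[of "[:a,1:]" q] by simp

lemma shift_Fract:
  assumes "q \<noteq> 0"
  shows "shift a (Fract p q) = Fract (pcompose p [:a,1:]) (pcompose q [:a,1:])"
proof -
  obtain p0 q0 where pq: "quot_of_fract (Fract p q) = (p0, q0)" by (cases "quot_of_fract (Fract p q)")
  have "(p0, q0) \<in> normalized_fracts" using quot_of_fract_in_normalized_fracts pq by metis
  hence q0: "q0 \<noteq> 0" by (metis not_normalized_fracts_0_denom)
  have "quot_to_fract (p0, q0) = Fract p q" using quot_to_fract_quot_of_fract pq by metis
  hence "Fract p0 q0 = Fract p q" by (simp add: quot_to_fract_def)
  hence e: "p0 * q = p * q0" using eq_fract(1)[OF q0 assms] by simp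
  have "pcompose p0 [:a,1:] * pcompose q [:a,1:] = pcompose p [:a,1:] * pcompose q0 [:a,1:]"
    using e by (metis pcompose_mult)
  hence "Fract (pcompose p0 [:a,1:]) (pcompose q0 [:a,1:]) = Fract (pcompose p [:a,1:]) (pcompose q [:a,1:])"
    using eq_fract(1)[OF pcomp_nz[OF q0] pcomp_nz[OF assms]] by simp
  thus ?thesis unfolding shift_def pq by simp
qed

lemma Fract_pow1: "(Fract (p::complex poly) 1) ^ n = Fract (p ^ n) 1"
  by (induction n) (simp_all add: One_fract_def)

lemma Fract_pow2: "(Fract 1 (p::complex poly)) ^ n = Fract 1 (p ^ n)"
  by (induction n) (simp_all add: One_fract_def)

lemma factor_powi:
  "(hvar - const_rf t) powi k = Fract ([:-t,1:] ^ nat k) ([:-t,1:] ^ nat (-k))"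
proof -
  have h: "hvar - const_rf t = Fract [:-t,1:] 1" by (simp add: hvar_def const_rf_def)
  show ?thesis
  proof (cases "k \<ge> 0")
    case True thus ?thesis by (simp add: power_int_def h Fract_pow1)
  next
    case False thus ?thesis by (simp add: power_int_def h Fract_pow2)
  qed
qed

lemma prod_factor:
  assumes "finite F"
  shows "(\<Prod>t\<in>F. (hvar - const_rf t) powi (m t)) =
    Fract (\<Prod>t\<in>F. [:-t,1:] ^ nat (m t)) (\<Prod>t\<in>F. [:-t,1:] ^ nat (- m t))"
  using assms by (induction F rule: finite_induct) (simp_all add: One_fract_def factor_powi)

lemma Fract_pCons: "Fract (pCons a p) 1 = const_rf a + hvar * Fract (p::complex poly) 1"
proof -
  have "pCons a p = [:a:] + [:0,1:] * p" by (simp add: poly_eq_iff coeff_pCons split: nat.splits)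
  thus ?thesis by (simp add: const_rf_def hvar_def)
qed

lemma mulpoly:
  assumes S: "is_submodule theta u S" and x: "x \<in> S"
  shows "Fract q 1 * x \<in> S"
proof (induction q)
  case (pCons a p)
  have "Fract (pCons a p) 1 * x = const_rf a * x + hvar * (Fract p 1 * x)"
    by (simp add: Fract_pCons algebra_simps)
  thus ?case using S x pCons.IH unfolding is_submodule_def by auto
qed (use S in \<open>simp add: is_submodule_def Zero_fract_def[symmetric]\<close>)

lemma polyin_sub:
  assumes S: "is_submodule theta u S" and p: "Fract p 1 \<in> S" and q: "Fract q 1 \<in> S"
  shows "Fract (p - q) 1 \<in> S"
proof -
  have "Fract (p - q) 1 = Fract p 1 + const_rf (-1) * Fract q 1" by (simp add: const_rf_def)
  thus ?thesis using S p q unfolding is_submodule_def by auto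
qed

lemma polyin_mult:
  assumes S: "is_submodule theta u S" and p: "Fract p 1 \<in> S"
  shows "Fract (q * p) 1 \<in> S"
  using mulpoly[OF S p, of q] by simp

lemma nonzero_poly:
  assumes S: "is_submodule theta u S" and x: "x \<in> S" "x \<noteq> 0"
  shows "\<exists>p. p \<noteq> 0 \<and> Fract p 1 \<in> S"
proof (cases x)
  case (Fract a b)
  have "a \<noteq> 0" using x Fract by (simp add: eq_fract Zero_fract_def)
  have "Fract b 1 * x = Fract a 1" using Fract by (simp add: eq_fract)
  thus ?thesis using mulpoly[OF S x(1), of b] \<open>a \<noteq> 0\<close> by metis
qed

lemma four_eq: "const_rf 4 = 4"
proof -
  have "(4::ratfun) = of_nat 4" by simp
  also have "\<dots> = Fract (of_nat 4) 1" by (rule of_nat_fract)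
  also have "(of_nat 4 :: complex poly) = [:4:]" by (simp add: of_nat_poly)
  finally show ?thesis by (simp add: const_rf_def)
qed

lemma phi_eq: "const_rf theta - (hvar + 1)^2 = Fract ([:theta:] - [:1,1:]^2) 1"
proof -
  have "[:0,1:] + 1 = [:1,1::complex:]" by (simp add: one_pCons)
  thus ?thesis by (simp add: const_rf_def hvar_def One_fract_def Fract_pow1)
qed

lemma key:
  fixes theta r1 r2 c :: complex and m :: "complex \<Rightarrow> int" and \<omega> :: real and u :: ratfun
  assumes roots: "\<forall>z. theta - (z + 1)^2 = - ((z - r1) * (z - r2))"
    and omega: "\<omega> = 3 + max (Re r1) (Re r2)"
    and c_nz: "c \<noteq> 0"
    and m_fin: "finite {t. m t \<noteq> 0}"
    and m_supp: "\<forall>t. m t \<noteq> 0 \<longrightarrow> \<omega> \<le> Re t \<and> Re t < \<omega> + 2"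
    and u_def: "u = const_rf c * (\<Prod>t\<in>{t. m t \<noteq> 0}. (hvar - const_rf t) powi (m t))"
    and S: "is_submodule theta u S" and Snz: "S \<noteq> {0}"
  shows "1 \<in> S"
proof -
  define F where "F = {t. m t \<noteq> 0}"
  define A where "A = [:c:] * (\<Prod>t\<in>F. [:-t,1:] ^ nat (m t))"
  define B where "B = (\<Prod>t\<in>F. [:-t,1:] ^ nat (- m t))"
  have finF: "finite F" using m_fin F_def by simp
  have u: "u = Fract A B" unfolding u_def F_def[symmetric] prod_factor[OF finF] A_def B_def
    by (simp add: const_rf_def)
  have Bnz: "B \<noteq> 0" unfolding B_def using finF by (simp add: prod_zero_iff)
  have Anz: "A \<noteq> 0" unfolding A_def using finF c_nz by (simp add: prod_zero_iff)
  have Aroot: "Re z \<ge> \<omega>" if "poly A z = 0" for z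
  proof -
    from that c_nz finF obtain t where "t \<in> F" "poly ([:-t,1:] ^ nat (m t)) z = 0"
      unfolding A_def by (auto simp: poly_prod prod_zero_iff)
    hence "t \<in> F" "z = t" "nat (m t) > 0" by (auto simp: poly_power)
    thus ?thesis using m_supp F_def by auto
  qed
  have Broot: "Re z < \<omega> + 2" if "poly B z = 0" for z
  proof -
    from that finF obtain t where "t \<in> F" "poly ([:-t,1:] ^ nat (- m t)) z = 0"
      unfolding B_def by (auto simp: poly_prod prod_zero_iff)
    hence "t \<in> F" "z = t" "nat (- m t) > 0" by (auto simp: poly_power)
    thus ?thesis using m_supp F_def by auto
  qed
  define I where "I = {p. Fract p 1 \<in> S}"
  obtain x where "x \<in> S" "x \<noteq> 0" using Snz S unfolding is_submodule_def by auto
  then obtain p0 where p0: "p0 \<noteq> 0" "p0 \<in> I" using nonzero_poly[OF S] I_def by auto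
  define n0 where "n0 = (LEAST n. \<exists>p. p \<noteq> 0 \<and> p \<in> I \<and> degree p = n)"
  have "\<exists>p. p \<noteq> 0 \<and> p \<in> I \<and> degree p = n0"
    unfolding n0_def by (rule LeastI[of _ "degree p0"]) (use p0 in auto)
  then obtain g where g: "g \<noteq> 0" "g \<in> I" "degree g = n0" by auto
  have gmin: "degree g \<le> degree p" if "p \<noteq> 0" "p \<in> I" for p
    unfolding g(3) n0_def by (rule Least_le) (use that in auto)
  have gdvd: "g dvd p" if "p \<in> I" for p
  proof -
    have "p mod g = p - (p div g) * g" by (simp add: minus_div_mult_eq_mod)
    hence "p mod g \<in> I" using polyin_sub[OF S _ polyin_mult[OF S]] that g(2) I_def by simp
    hence "p mod g = 0" using gmin degree_mod_less[OF g(1), of p] by fastforce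
    thus ?thesis by (simp add: mod_eq_0_iff_dvd)
  qed
  have groot: "poly p z = 0" if "p \<in> I" "poly g z = 0" for p z
    using gdvd[OF that(1)] that(2) by (auto simp: dvd_def)
  have eI: "pcompose g [:-2,1:] * A \<in> I"
  proof -
    have "e_act u (Fract g 1) \<in> S" using S g(2) I_def unfolding is_submodule_def by auto
    hence "Fract B 1 * e_act u (Fract g 1) \<in> S" by (rule mulpoly[OF S])
    moreover have "Fract B 1 * e_act u (Fract g 1) = Fract (pcompose g [:-2,1:] * A) 1"
      unfolding e_act_def sigma_def u using Bnz
      by (simp add: shift_Fract pcompose_1 eq_fract)
    ultimately show ?thesis using I_def by simp
  qed
  have fI: "([:theta:] - [:1,1:]^2) * pcompose g [:2,1:] * pcompose B [:2,1:] \<in> I"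
  proof -
    have "f_act theta u (Fract g 1) \<in> S" using S g(2) I_def unfolding is_submodule_def by auto
    hence "Fract (pcompose A [:2,1:]) 1 * f_act theta u (Fract g 1) \<in> S" by (rule mulpoly[OF S])
    hence "const_rf 4 * (Fract (pcompose A [:2,1:]) 1 * f_act theta u (Fract g 1)) \<in> S"
      using S unfolding is_submodule_def by auto
    moreover have "const_rf 4 * (Fract (pcompose A [:2,1:]) 1 * f_act theta u (Fract g 1)) =
       Fract (([:theta:] - [:1,1:]^2) * pcompose g [:2,1:] * pcompose B [:2,1:]) 1"
    proof -
      have four_nz: "(4::ratfun) \<noteq> 0" unfolding four_eq[symmetric]
        by (simp add: const_rf_def eq_fract Zero_fract_def)
      have Anz': "pcompose A [:2,1:] \<noteq> 0" using pcomp_nz[OF Anz] .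
      have "const_rf 4 * (Fract (pcompose A [:2,1:]) 1 * f_act theta u (Fract g 1)) =
        (4 * ((const_rf theta - (hvar + 1)^2) / 4)) * (Fract (pcompose A [:2,1:]) 1 * 
           (Fract (pcompose g [:2,1:]) 1 / Fract (pcompose A [:2,1:]) (pcompose B [:2,1:])))"
        unfolding f_act_def sigma_inv_def u four_eq using Bnz
        by (simp add: shift_Fract pcompose_1 algebra_simps)
      also have "\<dots> = Fract ([:theta:] - [:1,1:]^2) 1 * Fract (pcompose g [:2,1:] * pcompose B [:2,1:]) 1"
        using Anz' four_nz by (simp add: phi_eq eq_fract)
      finally show ?thesis by (simp add: mult.assoc)
    qed
    ultimately show ?thesis using I_def by simp
  qed
  have "degree g = 0"
  proof (rule ccontr)
    assume "degree g \<noteq> 0"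
    hence "\<not> constant (poly g)" by (simp add: constant_degree)
    then obtain z0 where "poly g z0 = 0" using fundamental_theorem_of_algebra by blast
    define Z where "Z = {z. poly g z = 0}"
    have finZ: "finite Z" using poly_roots_finite[OF g(1)] Z_def by simp
    have neZ: "Re ` Z \<noteq> {}" using \<open>poly g z0 = 0\<close> Z_def by auto
    obtain z where z: "z \<in> Z" "Re z = Min (Re ` Z)" using Min_in[OF finite_imageI[OF finZ] neZ] by auto
    obtain w where w: "w \<in> Z" "Re w = Max (Re ` Z)" using Max_in[OF finite_imageI[OF finZ] neZ] by auto
    have zw: "Re z \<le> Re w" using z w finZ by (metis Max_ge finite_imageI image_eqI)
    have "poly g (z - 2) \<noteq> 0"
    proof
      assume "poly g (z - 2) = 0"
      hence "z - 2 \<in> Z" using Z_def by simp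
      hence "Re z \<le> Re (z - 2)" using z finZ by (metis Min_le finite_imageI image_eqI)
      thus False by simp
    qed
    moreover have "poly (pcompose g [:-2,1:] * A) z = 0" using groot[OF eI] z Z_def by auto
    ultimately have "poly A z = 0" by (simp add: poly_pcompose)
    hence zge: "Re z \<ge> \<omega>" by (rule Aroot)
    have "poly g (w + 2) \<noteq> 0"
    proof
      assume "poly g (w + 2) = 0"
      hence "w + 2 \<in> Z" using Z_def by simp
      hence "Re (w + 2) \<le> Re w" using w finZ by (metis Max_ge finite_imageI image_eqI)
      thus False by simp
    qed
    moreover have "poly (([:theta:] - [:1,1:]^2) * pcompose g [:2,1:] * pcompose B [:2,1:]) w = 0"
      using groot[OF fI] w Z_def by auto
    ultimately have "theta - (1 + w)^2 = 0 \<or> poly B (2 + w) = 0"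
      by (simp add: poly_pcompose add.commute)
    thus False
    proof
      assume "theta - (1 + w)^2 = 0"
      hence "(w - r1) * (w - r2) = 0" using roots[rule_format, of w] by (simp add: add.commute)
      hence "w = r1 \<or> w = r2" by simp
      thus False using zge zw omega by auto
    next
      assume "poly B (2 + w) = 0"
      hence "Re (2 + w) < \<omega> + 2" by (rule Broot)
      thus False using zge zw by simp
    qed
  qed
  then obtain k where gk: "g = [:k:]" by (metis degree_eq_zeroE)
  hence "k \<noteq> 0" using g(1) by simp
  have "const_rf (1/k) * Fract g 1 \<in> S" using S g(2) I_def unfolding is_submodule_def by auto
  moreover have "const_rf (1/k) * Fract g 1 = 1" using \<open>k \<noteq> 0\<close> gk
    by (simp add: const_rf_def One_fract_def one_pCons)
  ultimately show ?thesis by simp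
qed

theorem proposition8:
  fixes theta r1 r2 c :: complex and m :: "complex \<Rightarrow> int" and \<omega> :: real and u :: ratfun
  assumes roots: "\<forall>z. theta - (z + 1)^2 = - ((z - r1) * (z - r2))"
    and omega: "\<omega> = 3 + max (Re r1) (Re r2)"
    and c_nz: "c \<noteq> 0"
    and m_fin: "finite {t. m t \<noteq> 0}"
    and m_supp: "\<forall>t. m t \<noteq> 0 \<longrightarrow> \<omega> \<le> Re t \<and> Re t < \<omega> + 2"
    and u_def: "u = const_rf c * (\<Prod>t\<in>{t. m t \<noteq> 0}. (hvar - const_rf t) powi (m t))"
  shows "(\<exists>L. is_simple_submodule theta u L) \<and>
         (\<forall>L. is_simple_submodule theta u L \<longrightarrow> range poly_to_ratfun \<subseteq> L)"
proof -
  have one: "1 \<in> S" if "is_submodule theta u S" "S \<noteq> {0}" for S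
    using key[OF roots omega c_nz m_fin m_supp u_def that] .
  have polys: "range poly_to_ratfun \<subseteq> S" if "is_submodule theta u S" "S \<noteq> {0}" for S
  proof
    fix y assume "y \<in> range poly_to_ratfun"
    then obtain p where "y = Fract p 1" by (auto simp: poly_to_ratfun_def)
    thus "y \<in> S" using mulpoly[OF that(1) one[OF that], of p] by simp
  qed
  define L0 where "L0 = \<Inter>{S. is_submodule theta u S \<and> 1 \<in> S}"
  have L0sub: "is_submodule theta u L0"
    unfolding L0_def is_submodule_def by auto
  have "1 \<in> L0" unfolding L0_def by auto
  hence L0nz: "L0 \<noteq> {0}" by auto
  have "is_simple_submodule theta u L0"
    unfolding is_simple_submodule_def
  proof (intro conjI L0sub L0nz allI impI)
    fix T assume T: "is_submodule theta u T \<and> T \<subseteq> L0"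
    show "T = {0} \<or> T = L0"
    proof (cases "T = {0}")
      case False
      hence "1 \<in> T" using one T by auto
      hence "L0 \<subseteq> T" using T unfolding L0_def by auto
      thus ?thesis using T by auto
    qed simp
  qed
  moreover have "\<forall>L. is_simple_submodule theta u L \<longrightarrow> range poly_to_ratfun \<subseteq> L"
    using polys unfolding is_simple_submodule_def by blast
  ultimately show ?thesis by blast
qed

end
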